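(* Let $a,x$ be integers with $3\le a\le x$, let $\lambda=(x,x,ax)$ and $n=x(a+2)$, and suppose $n-1$ is coprime to both $a$ and $x$. For $1\le i\le n-2$ write uniquely $i=(a+2)r_i+p_i$ with integers $0\le r_i<x$ and $0\le p_i<a+2$, let $f(i)=ar_i-(2x-1)p_i$, and for $s\in\mathbb{Z}$ let $F_s=\{i\in\{1,\dots,n-2\}: s=-\lfloor f(i)/(n-1)\rfloor\}$. Then for every $1\le i\le n-2$ and every integer $s$, $i\in F_s$ if and only if $n-1-i\in F_{2-s}$. *)

theory Defs
  imports Complex_Main
begin

definition fval :: "int \<Rightarrow> int \<Rightarrow> int \<Rightarrow> int" where
  "fval a x i = a * (i div (a + 2)) - (2 * x - 1) * (i mod (a + 2))"

definition Fset :: "int \<Rightarrow> int \<Rightarrow> int \<Rightarrow> int set" where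
  "Fset a x s = {i \<in> {1 .. x * (a + 2) - 2}.
      s = - floor (of_int (fval a x i) / (of_int (x * (a + 2) - 1) :: real))}"

end

theory Submission
  imports Defs
begin

lemma fval_notdvd:
  fixes a x i :: int
  assumes "3 \<le> a" "a \<le> x" "coprime (x*(a+2) - 1) a"
    and "1 \<le> i" "i \<le> x*(a+2) - 2"
  shows "\<not> (x*(a+2) - 1) dvd fval a x i"
proof
  assume d: "(x*(a+2) - 1) dvd fval a x i"
  define b where "b = a + 2"
  define r where "r = i div b"
  define p where "p = i mod b"
  have i: "i = b*r + p" unfolding r_def p_def by simp
  have f: "fval a x i = a*r - (2*x-1)*p" unfolding fval_def r_def p_def b_def by simp
  have "b * fval a x i = b*(a*r - (2*x-1)*p)" by (simp add: f)
  also have "\<dots> = a*(b*r+p) - 2*p*(x*(a+2) - 1)" unfolding b_def by (simp add: algebra_simps)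
  also have "\<dots> = a*i - 2*p*(x*(a+2) - 1)" using i by simp
  finally have "b * fval a x i = a*i - 2*p*(x*(a+2) - 1)" .
  hence "a*i = b * fval a x i + 2*p*(x*(a+2) - 1)" by simp
  hence "(x*(a+2) - 1) dvd a*i" using d by simp
  hence "(x*(a+2) - 1) dvd i" using assms(3) coprime_dvd_mult_right_iff by blast
  moreover have "0 < i" "i < x*(a+2) - 1" using assms by auto
  ultimately show False using zdvd_imp_le[of "x*(a+2) - 1" i] by linarith
qed

theorem proposition4p10:
  fixes a x n :: int
  assumes "3 \<le> a" and "a \<le> x"
    and "n = x * (a + 2)"
    and "coprime (n - 1) a" and "coprime (n - 1) x"
  shows "\<forall>i \<in> {1 .. n - 2}. \<forall>s :: int.
           i \<in> Fset a x s \<longleftrightarrow> n - 1 - i \<in> Fset a x (2 - s)"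
proof (intro ballI allI)
  fix i s assume iin: "i \<in> {1 .. n - 2}"
  define N where "N = n - 1"
  define b where "b = a + 2"
  define r where "r = i div b"
  define p where "p = i mod b"
  have bpos: "b > 0" using assms unfolding b_def by simp
  have i: "i = b*r + p" unfolding r_def p_def by simp
  have p0: "0 \<le> p" "p < b" unfolding p_def using bpos by auto
  have fi: "fval a x i = a*r - (2*x-1)*p" unfolding fval_def r_def p_def b_def by simp
  define j where "j = n - 1 - i"
  have j: "j = (b - 1 - p) + (x - 1 - r) * b"
    unfolding j_def i using assms(3) unfolding b_def by (simp add: algebra_simps)
  have jdiv: "j div b = x - 1 - r" unfolding j using p0 bpos
    by (simp add: div_pos_pos_trivial)
  have jmod: "j mod b = b - 1 - p" unfolding j using p0 bpos
    by (simp add: mod_pos_pos_trivial)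
  have "fval a x j = a * (j div b) - (2*x-1) * (j mod b)" unfolding fval_def b_def by simp
  also have "\<dots> = a * (x-1-r) - (2*x-1)*(b-1-p)" unfolding jdiv jmod by simp
  also have "\<dots> = - N - fval a x i" unfolding fi N_def assms(3) b_def by (simp add: algebra_simps)
  finally have fj: "fval a x j = - N - fval a x i" .
  have "x*(a+2) \<ge> x*5" using assms by (intro mult_left_mono) auto
  hence Npos: "N > 0" using assms unfolding N_def by linarith
  have nd: "\<not> N dvd fval a x i"
    using fval_notdvd[OF assms(1,2)] assms(4) iin unfolding N_def assms(3) by auto
  hence nm: "fval a x i mod N \<noteq> 0" by (simp add: dvd_eq_mod_eq_0)
  have key: "fval a x j div N = -2 - fval a x i div N"
  proof -
    have "fval a x j = (- fval a x i) + (-1) * N" unfolding fj by simp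
    hence "fval a x j div N = (- fval a x i) div N + (-1)" using Npos
      using div_mult_self1[of N "- fval a x i" "-1"] by simp
    also have "(- fval a x i) div N = - (fval a x i div N) - 1"
      using nm Npos by (simp add: zdiv_zminus1_eq_if)
    finally show ?thesis by simp
  qed
  have jin: "j \<in> {1 .. n - 2}" using iin unfolding j_def by auto
  have fl: "\<And>k. floor (of_int (fval a x k) / (of_int (x * (a + 2) - 1) :: real)) = fval a x k div N"
    unfolding N_def assms(3) by (rule floor_divide_of_int_eq)
  have iin': "i \<in> {1 .. x * (a + 2) - 2}" using iin assms(3) by simp
  have jin': "j \<in> {1 .. x * (a + 2) - 2}" using jin assms(3) by simp
  have "i \<in> Fset a x s \<longleftrightarrow> s = - (fval a x i div N)"
    unfolding Fset_def fl using iin' by simp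
  moreover have "j \<in> Fset a x (2 - s) \<longleftrightarrow> 2 - s = - (fval a x j div N)"
    unfolding Fset_def fl using jin' by simp
  ultimately show "i \<in> Fset a x s \<longleftrightarrow> n - 1 - i \<in> Fset a x (2 - s)"
    unfolding j_def[symmetric] using key by linarith
qed

end
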